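(* Assume $\phi_1>\alpha(C_s+C_m)$. There exists $\bar\pi>0$ such that for every $\pi>\bar\pi$, $$\tilde U_M(\mathbf r,\pi)<\tilde U_M(\mathbf r^{id},\pi)\quad\text{for all }\mathbf r\in\mathcal R_e\text{ with }\mathbf r\neq\mathbf r^{id}.$$
   Context: Supply-chain model. The parameters are a price-sensitivity $\alpha\in(0,1]$, a manufacturer's per-unit production cost $C_m\ge 0$, and a supplier's per-unit procurement cost $C_s\ge 0$. For $x\in\mathbb R$ write $x^+=\max\{0,x\}$. The market potential takes values in $\{\phi_1,\dots,\phi_L\}$ with $\phi_1<\phi_2<\dots<\phi_L$, with respective probabilities $\sigma_1,\dots,\sigma_L>0$ summing to $1$. Greedy misreporting policies. $\mathcal R_e$ is the set of $L\times L$ matrices $\mathbf r=(r_{ij})$ such that $r_{ij}\ge0$ for all $i,j$, $r_{ij}=0$ whenever $i<j$, and $\sum_j r_{ij}=1$ for every $i$. Here $r_{ij}$ is the probability of reporting $\phi_j$ when the true potential is $\phi_i$, so a greedy manufacturer only under-reports. $\mathbf r^{id}$ denotes the identity matrix, i.e. truthful reporting. Further notation. Define $$f(\mathbf r)=\sum_{i\ge j}\sigma_i(\phi_i-\phi_j)r_{ij}$$ and $$h_{ij}=\frac{2\phi_i-\phi_j-\alpha(C_m+C_s)}{4\sqrt\alpha}.$$ For a penalty parameter $\pi\ge0$, the manufacturer's limiting utility under misreporting policy $\mathbf r$ and punitive policy $\pi$ is $$\tilde U_M(\mathbf r,\pi)=\sum_{i\ge j}\sigma_i\,r_{ij}\Big(\big[h_{ij}-\pi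 f(\mathbf r)\big]^+\Big)^2 .$$ *)

theory Defs
  imports "HOL-Analysis.Analysis"
begin

text \<open>Indices are 0..L-1 (the paper's 1..L shifted). Matrices are functions
  nat => nat => real, only their entries with indices below L matter.\<close>

definition pos_part :: "real \<Rightarrow> real" where
  "pos_part x = max 0 x"

definition greedy_policies :: "nat \<Rightarrow> (nat \<Rightarrow> nat \<Rightarrow> real) set" where
  "greedy_policies L = {r. (\<forall>i<L. \<forall>j<L. r i j \<ge> 0) \<and>
                           (\<forall>i<L. \<forall>j<L. i < j \<longrightarrow> r i j = 0) \<and>
                           (\<forall>i<L. (\<Sum>j<L. r i j) = 1)}"

definition r_id :: "nat \<Rightarrow> nat \<Rightarrow> real" where
  "r_id i j = (if i = j then 1 else 0)"

definition mat_eq :: "nat \<Rightarrow> (nat \<Rightarrow> nat \<Rightarrow> real) \<Rightarrow> (nat \<Rightarrow> nat \<Rightarrow> real) \<Rightarrow> bool" where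
  "mat_eq L r s = (\<forall>i<L. \<forall>j<L. r i j = s i j)"

definition f_mis :: "nat \<Rightarrow> (nat \<Rightarrow> real) \<Rightarrow> (nat \<Rightarrow> real) \<Rightarrow> (nat \<Rightarrow> nat \<Rightarrow> real) \<Rightarrow> real" where
  "f_mis L \<phi> \<sigma> r = (\<Sum>i<L. \<Sum>j\<le>i. \<sigma> i * (\<phi> i - \<phi> j) * r i j)"

definition h_coef :: "real \<Rightarrow> real \<Rightarrow> real \<Rightarrow> (nat \<Rightarrow> real) \<Rightarrow> nat \<Rightarrow> nat \<Rightarrow> real" where
  "h_coef \<alpha> Cm Cs \<phi> i j = (2 * \<phi> i - \<phi> j - \<alpha> * (Cm + Cs)) / (4 * sqrt \<alpha>)"

definition U_M :: "real \<Rightarrow> real \<Rightarrow> real \<Rightarrow> nat \<Rightarrow> (nat \<Rightarrow> real) \<Rightarrow> (nat \<Rightarrow> real)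
                    \<Rightarrow> (nat \<Rightarrow> nat \<Rightarrow> real) \<Rightarrow> real \<Rightarrow> real" where
  "U_M \<alpha> Cm Cs L \<phi> \<sigma> r \<pi> =
     (\<Sum>i<L. \<Sum>j\<le>i. \<sigma> i * r i j *
        (pos_part (h_coef \<alpha> Cm Cs \<phi> i j - \<pi> * f_mis L \<phi> \<sigma> r))\<^sup>2)"

end

theory Submission
  imports Defs
begin

lemma g_up:
  fixes x y B s c :: real
  assumes "0 < c" "c \<le> x" "y \<le> B" "y - x \<le> s" "0 \<le> s" "0 \<le> B"
  shows "(pos_part y)\<^sup>2 - x\<^sup>2 \<le> 2 * B * s"
proof (cases "y \<le> x")
  case True
  have "0 \<le> pos_part y" "pos_part y \<le> x" using True assms by (auto simp: pos_part_def)
  then have "(pos_part y)\<^sup>2 \<le> x\<^sup>2" by (simp add: power_mono)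
  moreover have "0 \<le> 2 * B * s" using assms by simp
  ultimately show ?thesis by linarith
next
  case False
  then have py: "pos_part y = y" using assms by (auto simp: pos_part_def)
  have "y\<^sup>2 - x\<^sup>2 = (y - x) * (y + x)" by (simp add: power2_eq_square algebra_simps)
  also have "\<dots> \<le> s * (2 * B)"
    using False assms by (intro mult_mono) auto
  finally show ?thesis using py by (simp add: mult.commute)
qed

lemma g_down:
  fixes x y c :: real
  assumes "0 < c" "c \<le> x" "y \<le> x"
  shows "(pos_part y)\<^sup>2 - x\<^sup>2 \<le> - c * min (x - y) c"
proof (cases "y \<le> 0")
  case True
  then have "pos_part y = 0" by (simp add: pos_part_def)
  moreover have "c * min (x - y) c \<le> c * c" using assms by (intro mult_left_mono) auto
  moreover have "c * c \<le> x * x" using assms by (intro mult_mono) auto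
  ultimately show ?thesis by (simp add: power2_eq_square)
next
  case False
  then have py: "pos_part y = y" by (simp add: pos_part_def)
  have "y\<^sup>2 - x\<^sup>2 = - ((x - y) * (x + y))" by (simp add: power2_eq_square algebra_simps)
  also have "(x - y) * c \<le> (x - y) * (x + y)" using False assms by (intro mult_left_mono) auto
  then have "- ((x - y) * (x + y)) \<le> - ((x - y) * c)" by simp
  also have "(x - y) * c \<ge> c * min (x - y) c" using assms by (simp add: mult.commute mult_left_mono)
  then have "- ((x - y) * c) \<le> - c * min (x - y) c" by simp
  finally show ?thesis using py by simp
qed

lemma min_bound:
  fixes t c D :: real
  assumes "0 < c" "c \<le> D" "0 \<le> t" "t \<le> D"
  shows "c\<^sup>2 * t / D \<le> c * min t c"
proof -
  have D: "0 < D" using assms by simp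
  have "c * t \<le> D * min t c"
  proof (cases "t \<le> c")
    case True
    then show ?thesis using assms by (simp add: mult_right_mono min_def)
  next
    case False
    then show ?thesis using assms by (simp add: mult_left_mono min_def mult.commute)
  qed
  then have "c * (c * t) \<le> c * (D * min t c)" using assms by (intro mult_left_mono) auto
  then show ?thesis using D by (simp add: divide_le_eq power2_eq_square algebra_simps)
qed

lemma off_bound:
  fixes e \<delta> P :: real
  assumes "0 < \<delta>" "\<delta> \<le> e" "0 \<le> P"
  shows "P \<le> e * (P / \<delta>)"
proof -
  have "\<delta> * (P / \<delta>) \<le> e * (P / \<delta>)" using assms by (intro mult_right_mono) auto
  then show ?thesis using assms by simp
qed

lemma member_le_dsum:
  fixes F :: "nat \<Rightarrow> nat \<Rightarrow> real"
  assumes "\<And>i j. i < L \<Longrightarrow> j \<le> i \<Longrightarrow> 0 \<le> F i j" "i < L" "j \<le> i"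
  shows "F i j \<le> (\<Sum>i<L. \<Sum>j\<le>i. F i j)"
proof -
  have "F i j \<le> (\<Sum>j\<le>i. F i j)" using assms by (intro member_le_sum) auto
  also have "\<dots> \<le> (\<Sum>i<L. \<Sum>j\<le>i. F i j)"
    using assms by (intro member_le_sum[where f="\<lambda>i. \<Sum>j\<le>i. F i j"] sum_nonneg) auto
  finally show ?thesis .
qed

lemma delta_sum:
  fixes a :: real and X :: "nat \<Rightarrow> real"
  shows "(\<Sum>j\<le>i. a * (if i = j then 1 else 0) * X j) = a * X i"
proof -
  have "(\<Sum>j\<le>i. a * (if i = j then 1 else 0) * X j) = (\<Sum>j\<in>{..i}. if i = j then a * X i else 0)"
    by (intro sum.cong) auto
  also have "\<dots> = a * X i" by simp
  finally show ?thesis .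
qed

lemma row_sum:
  assumes "r \<in> greedy_policies L" "i < L"
  shows "(\<Sum>j\<le>i. r i j) = 1"
proof -
  have "(\<Sum>j\<le>i. r i j) = (\<Sum>j<L. r i j)"
    using assms by (intro sum.mono_neutral_left) (auto simp: greedy_policies_def)
  then show ?thesis using assms by (simp add: greedy_policies_def)
qed


theorem theorem1:
  fixes \<alpha> Cm Cs :: real and L :: nat and \<phi> \<sigma> :: "nat \<Rightarrow> real"
  assumes "0 < \<alpha>" and "\<alpha> \<le> 1" and "0 \<le> Cm" and "0 \<le> Cs"
    and "1 \<le> L"
    and "\<And>i j. i < j \<Longrightarrow> j < L \<Longrightarrow> \<phi> i < \<phi> j"
    and "\<And>i. i < L \<Longrightarrow> 0 < \<sigma> i"
    and "(\<Sum>i<L. \<sigma> i) = 1"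
    and "\<phi> 0 > \<alpha> * (Cs + Cm)"
  shows "\<exists>\<pi>bar>0. \<forall>\<pi>>\<pi>bar. \<forall>r\<in>greedy_policies L. \<not> mat_eq L r r_id \<longrightarrow>
           U_M \<alpha> Cm Cs L \<phi> \<sigma> r \<pi> < U_M \<alpha> Cm Cs L \<phi> \<sigma> r_id \<pi>"
proof -
  note mono = assms(6) and spos = assms(7) and ssum = assms(8)
  define h where "h = h_coef \<alpha> Cm Cs \<phi>"
  define k where "k = 1 / (4 * sqrt \<alpha>)"
  define c where "c = h 0 0"
  define e where "e = (\<lambda>i j. \<phi> i - \<phi> j)"
  define B where "B = (\<Sum>i<L. \<Sum>j\<le>i. \<bar>h i j\<bar>)"
  define D where "D = (\<Sum>i<L. \<Sum>j\<le>i. k * e i j)"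
  define D' where "D' = D + c"
  define \<delta> where "\<delta> = Min (insert 1 {\<phi> i - \<phi> j | i j. j < i \<and> i < L})"
  have sa: "0 < sqrt \<alpha>" using assms(1) by simp
  have kpos: "0 < k" unfolding k_def using sa by simp
  have hdiff: "h i j - h i i = k * e i j" for i j
    unfolding h_def h_coef_def k_def e_def using sa by (simp add: field_simps)
  have cpos: "0 < c"
    unfolding c_def h_def h_coef_def using sa assms(9) by (simp add: algebra_simps)
  have phimono: "\<phi> j \<le> \<phi> i" if "j \<le> i" "i < L" for i j
    using mono[of j i] that by (cases "j = i") auto
  have hii: "c \<le> h i i" if "i < L" for i
  proof -
    have "\<phi> 0 \<le> \<phi> i" using phimono[of 0 i] that by simp
    then show ?thesis unfolding c_def h_def h_coef_def using sa
      by (intro divide_right_mono) auto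
  qed
  have e_nn: "0 \<le> e i j" if "i < L" "j \<le> i" for i j
    using phimono[of j i] that unfolding e_def by simp
  have fin: "finite {\<phi> i - \<phi> j | i j. j < i \<and> i < L}"
  proof -
    have "{\<phi> i - \<phi> j | i j. j < i \<and> i < L} \<subseteq> (\<lambda>(i,j). \<phi> i - \<phi> j) ` ({..<L} \<times> {..<L})"
      by auto
    then show ?thesis by (rule finite_subset) auto
  qed
  have dpos: "0 < \<delta>"
    unfolding \<delta>_def using fin mono by (subst Min_gr_iff) auto
  have e_delta: "\<delta> \<le> e i j" if "j < i" "i < L" for i j
    unfolding \<delta>_def e_def using fin that by (intro Min_le) auto
  have hB: "h i j \<le> B" if "i < L" "j \<le> i" for i j
  proof -
    have "\<bar>h i j\<bar> \<le> B" unfolding B_def using that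
      by (intro member_le_dsum[where F="\<lambda>i j. \<bar>h i j\<bar>"]) auto
    then show ?thesis by simp
  qed
  have B0: "0 \<le> B" unfolding B_def by (intro sum_nonneg) auto
  have kD: "k * e i j \<le> D" if "i < L" "j \<le> i" for i j
    unfolding D_def using that kpos e_nn
    by (intro member_le_dsum[where F="\<lambda>i j. k * e i j"]) auto
  have D0: "0 \<le> D" unfolding D_def using kpos e_nn by (intro sum_nonneg) auto
  have D'pos: "0 < D'" "c \<le> D'" unfolding D'_def using D0 cpos by auto
  define \<pi>bar where "\<pi>bar = max (2 * D' / \<delta>) (4 * B * k * D' / c\<^sup>2) + 1"
  have pb1: "2 * D' / \<delta> < \<pi>bar" "4 * B * k * D' / c\<^sup>2 < \<pi>bar" unfolding \<pi>bar_def by auto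
  have "0 < 2 * D' / \<delta>" using D'pos dpos by simp
  then have pbpos: "0 < \<pi>bar" using pb1 by linarith
  show ?thesis
  proof (intro exI[of _ \<pi>bar] conjI allI impI ballI pbpos)
    fix \<pi> r
    assume pi: "\<pi>bar < \<pi>" and rg: "r \<in> greedy_policies L" and rne: "\<not> mat_eq L r r_id"

    define f where "f = f_mis L \<phi> \<sigma> r"
    define t where "t = \<pi> * f"
    have r_nn: "0 \<le> r i j" if "i < L" "j \<le> i" for i j
      using rg that unfolding greedy_policies_def by auto
    have w_nn: "0 \<le> \<sigma> i * r i j" if "i < L" "j \<le> i" for i j
      using r_nn[OF that] spos[OF that(1)] by simp
    have Sw: "(\<Sum>i<L. \<Sum>j\<le>i. \<sigma> i * r i j) = 1"
    proof -
      have "(\<Sum>i<L. \<Sum>j\<le>i. \<sigma> i * r i j) = (\<Sum>i<L. \<sigma> i * (\<Sum>j\<le>i. r i j))"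
        by (simp add: sum_distrib_left)
      also have "\<dots> = (\<Sum>i<L. \<sigma> i)" using row_sum[OF rg] by simp
      finally show ?thesis using ssum by simp
    qed
    have f_eq: "f = (\<Sum>i<L. \<Sum>j\<le>i. \<sigma> i * (\<phi> i - \<phi> j) * r i j)"
      unfolding f_def f_mis_def by simp
    have ft_nn: "0 \<le> \<sigma> i * (\<phi> i - \<phi> j) * r i j" if "i < L" "j \<le> i" for i j
      using w_nn[OF that] e_nn[OF that] unfolding e_def
      by (metis mult.commute mult.left_commute mult_nonneg_nonneg)
    obtain i0 j0 where ij0: "j0 < i0" "i0 < L" "0 < r i0 j0"
    proof -
      from rne obtain i j where ij: "i < L" "j < L" "r i j \<noteq> r_id i j"
        unfolding mat_eq_def by auto
      show ?thesis
      proof (cases "i < j")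
        case True then show ?thesis using ij rg unfolding greedy_policies_def r_id_def by auto
      next
        case False
        show ?thesis
        proof (cases "j = i")
          case False
          then have "j < i" using \<open>\<not> i < j\<close> by simp
          then show ?thesis using that ij r_nn[of i j] unfolding r_id_def by force
        next
          case True
          have rii: "r i i \<noteq> 1" using ij True unfolding r_id_def by simp
          have "(\<Sum>j\<le>i. r i j) = r i i + (\<Sum>j<i. r i j)"
            by (simp add: lessThan_Suc_atMost[symmetric])
          then have "(\<Sum>j<i. r i j) \<noteq> 0" using row_sum[OF rg ij(1)] rii by simp
          then obtain j' where "j' < i" "r i j' \<noteq> 0" by (meson sum.neutral lessThan_iff)
          then show ?thesis using that ij r_nn[of i j'] by force
        qed
      qed
    qed
    have fpos: "0 < f"
    proof -
      have "0 < \<sigma> i0 * (\<phi> i0 - \<phi> j0) * r i0 j0"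
        using ij0 spos[of i0] mono[of j0 i0] by simp
      also have "\<dots> \<le> f" unfolding f_eq using ij0 ft_nn
        by (intro member_le_dsum[where F="\<lambda>i j. \<sigma> i * (\<phi> i - \<phi> j) * r i j"]) auto
      finally show ?thesis .
    qed
    have pipos: "0 < \<pi>" using pi pbpos by simp
    have tpos: "0 < t" unfolding t_def using pipos fpos by simp
    have fid: "f_mis L \<phi> \<sigma> r_id = 0"
      unfolding f_mis_def r_id_def by (auto intro!: sum.neutral)
    have Uid: "U_M \<alpha> Cm Cs L \<phi> \<sigma> r_id \<pi> = (\<Sum>i<L. \<Sum>j\<le>i. \<sigma> i * r i j * (h i i)\<^sup>2)"
    proof -
      have "U_M \<alpha> Cm Cs L \<phi> \<sigma> r_id \<pi> = (\<Sum>i<L. \<sigma> i * (pos_part (h i i))\<^sup>2)"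
        unfolding U_M_def fid h_def r_id_def by (simp add: delta_sum)
      also have "\<dots> = (\<Sum>i<L. \<sigma> i * (h i i)\<^sup>2)"
      proof (intro sum.cong refl)
        fix i assume "i \<in> {..<L}"
        then have "0 \<le> h i i" using hii[of i] cpos by simp
        then show "\<sigma> i * (pos_part (h i i))\<^sup>2 = \<sigma> i * (h i i)\<^sup>2" by (simp add: pos_part_def)
      qed
      also have "\<dots> = (\<Sum>i<L. \<sigma> i * (\<Sum>j\<le>i. r i j) * (h i i)\<^sup>2)"
        using row_sum[OF rg] by simp
      also have "\<dots> = (\<Sum>i<L. \<Sum>j\<le>i. \<sigma> i * r i j * (h i i)\<^sup>2)"
        by (simp add: sum_distrib_left sum_distrib_right)
      finally show ?thesis .
    qed
    have Ur: "U_M \<alpha> Cm Cs L \<phi> \<sigma> r \<pi> = (\<Sum>i<L. \<Sum>j\<le>i. \<sigma> i * r i j * (pos_part (h i j - t))\<^sup>2)"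
      unfolding U_M_def h_def t_def f_def ..
    define \<Delta> where "\<Delta> = (\<lambda>i j. (pos_part (h i j - t))\<^sup>2 - (h i i)\<^sup>2)"
    have diff: "U_M \<alpha> Cm Cs L \<phi> \<sigma> r \<pi> - U_M \<alpha> Cm Cs L \<phi> \<sigma> r_id \<pi>
        = (\<Sum>i<L. \<Sum>j\<le>i. \<sigma> i * r i j * \<Delta> i j)"
      unfolding Ur Uid \<Delta>_def by (simp add: sum_subtractf right_diff_distrib)
    have neg: "(\<Sum>i<L. \<Sum>j\<le>i. \<sigma> i * r i j * \<Delta> i j) < 0"
    proof -
    have hxy: "h i j - t - h i i = k * e i j - t" for i j using hdiff[of i j] by simp
    show "(\<Sum>i<L. \<Sum>j\<le>i. \<sigma> i * r i j * \<Delta> i j) < 0"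
    proof (cases "t \<le> D'")
      case True
      note tD = True
      define P where "P = c\<^sup>2 * t / D'"
      define X where "X = 2 * B * k + P / \<delta>"
      have P0: "0 \<le> P" unfolding P_def using tpos D'pos by simp
      have termb: "\<Delta> i j \<le> e i j * X - P" if "i < L" "j \<le> i" for i j
      proof (cases "j = i")
        case True
        have "\<Delta> i j \<le> - c * min (h i i - (h i i - t)) c"
          unfolding \<Delta>_def True using g_down[of c "h i i" "h i i - t"] cpos hii[OF that(1)] tpos by simp
        also have "\<dots> \<le> - P" unfolding P_def
          using min_bound[of c D' t] cpos D'pos tpos tD by simp
        finally show ?thesis using True unfolding e_def by simp
      next
        case False
        then have ji: "j < i" using that by simp
        have "\<Delta> i j \<le> 2 * B * (k * e i j)"
          unfolding \<Delta>_def
          using g_up[of c "h i i" "h i j - t" B "k * e i j"] cpos hii[OF that(1)] hB[OF that] tpos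
            hxy[of i j] kpos e_nn[OF that] B0 by simp
        moreover have "P \<le> e i j * (P / \<delta>)" using off_bound[OF dpos e_delta[OF ji that(1)] P0] .
        ultimately show ?thesis unfolding X_def by (simp add: algebra_simps)
      qed
      have "(\<Sum>i<L. \<Sum>j\<le>i. \<sigma> i * r i j * \<Delta> i j) \<le> (\<Sum>i<L. \<Sum>j\<le>i. \<sigma> i * r i j * (e i j * X - P))"
        using termb w_nn by (intro sum_mono mult_left_mono) auto
      also have "\<dots> = (\<Sum>i<L. \<Sum>j\<le>i. X * (\<sigma> i * (\<phi> i - \<phi> j) * r i j) - P * (\<sigma> i * r i j))"
        by (intro sum.cong refl) (simp add: e_def algebra_simps)
      also have "\<dots> = X * f - P * (\<Sum>i<L. \<Sum>j\<le>i. \<sigma> i * r i j)"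
        by (simp add: sum_subtractf sum_distrib_left f_eq)
      also have "\<dots> = X * f - P" using Sw by simp
      also have "\<dots> < 0"
      proof -
        have "2 * D' < \<pi>bar * \<delta>" using pb1(1) dpos by (simp add: pos_divide_less_eq)
        moreover have "\<pi>bar * \<delta> < \<pi> * \<delta>" using pi dpos by simp
        ultimately have "2 * D' < \<pi> * \<delta>" by linarith
        moreover have "2 * (\<pi> * f) \<le> 2 * D'" using tD unfolding t_def by simp
        ultimately have "\<pi> * (2 * f) < \<pi> * \<delta>" by simp
        then have f2: "2 * f < \<delta>" using pipos by simp
        have "P / \<delta> * f \<le> P / 2"
        proof -
          have "f / \<delta> \<le> 1 / 2" using f2 dpos by (simp add: divide_le_eq)
          then have "P * (f / \<delta>) \<le> P * (1/2)" using P0 by (intro mult_left_mono) auto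
          then show ?thesis by simp
        qed
        have "4 * B * k * D' < \<pi>bar * c\<^sup>2" using pb1(2) cpos by (simp add: pos_divide_less_eq)
        moreover have "\<pi>bar * c\<^sup>2 < \<pi> * c\<^sup>2" using pi cpos by simp
        ultimately have "4 * B * k * D' < \<pi> * c\<^sup>2" by linarith
        then have "4 * B * k * D' * f < \<pi> * c\<^sup>2 * f" using fpos by simp
        then have "2 * B * k * f < P / 2" unfolding P_def t_def using D'pos
          by (simp add: field_simps)
        moreover have "X * f - P = 2 * B * k * f + P / \<delta> * f - P" unfolding X_def by (simp add: algebra_simps)
        ultimately show ?thesis using \<open>P / \<delta> * f \<le> P / 2\<close> by linarith
      qed
      finally show ?thesis .
    next
      case False
      have termb: "\<Delta> i j \<le> - c * c" if "i < L" "j \<le> i" for i j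
      proof -
        have ke: "k * e i j \<le> D" using kD[OF that] .
        have "\<Delta> i j \<le> - c * min (h i i - (h i j - t)) c"
          unfolding \<Delta>_def using g_down[of c "h i i" "h i j - t"] cpos hii[OF that(1)]
            hxy[of i j] ke False unfolding D'_def by simp
        moreover have "min (h i i - (h i j - t)) c = c" using hxy[of i j] ke False unfolding D'_def by simp
        ultimately show ?thesis by simp
      qed
      have "(\<Sum>i<L. \<Sum>j\<le>i. \<sigma> i * r i j * \<Delta> i j) \<le> (\<Sum>i<L. \<Sum>j\<le>i. \<sigma> i * r i j * (- c * c))"
        using termb w_nn by (intro sum_mono mult_left_mono) auto
      also have "\<dots> = (- c * c) * (\<Sum>i<L. \<Sum>j\<le>i. \<sigma> i * r i j)"
        by (simp add: sum_distrib_left sum_distrib_right algebra_simps)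
      also have "\<dots> < 0" using Sw cpos by simp
      finally show ?thesis .
    qed
    qed
    then show "U_M \<alpha> Cm Cs L \<phi> \<sigma> r \<pi> < U_M \<alpha> Cm Cs L \<phi> \<sigma> r_id \<pi>"
      using diff by simp
  qed
qed

end
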